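(* For all integers $n,k\geq 1$, the RBM variety and the RBM model factor as Hadamard powers: $V^k_n=(V^1_n)^{[k]}$ and $M^k_n=(M^1_n)^{[k]}$.
   Context: For parameters $W\in\mathbb{R}^{k\times n}$, $b\in\mathbb{R}^n$, $c\in\mathbb{R}^k$ and $v\in\{0,1\}^n$, $h\in\{0,1\}^k$ put $\psi(v,h)=\exp(h^{\top}Wv+b^{\top}v+c^{\top}h)$ and $p(v)=\frac1Z\sum_{h}\psi(v,h)$ with $Z=\sum_{v,h}\psi(v,h)$. Equivalently, with $\gamma_i=e^{c_i}$, $\omega_{ij}=e^{W_{ij}}$, $\beta_j=e^{b_j}$, $p(v)=\frac1Z\beta_1^{v_1}\cdots\beta_n^{v_n}\prod_{i=1}^k(1+\gamma_i\omega_{i1}^{v_1}\cdots\omega_{in}^{v_n})$. The RBM model $M^k_n$ is the set of all such $(p(v))_{v\in\{0,1\}^n}$ in the open simplex $\Delta_{2^n-1}$. The RBM variety $V^k_n$ is the Zariski closure of $M^k_n$ in the complex projective space $\mathbb{P}^{2^n-1}$. For subvarieties $X,Y\subseteq\mathbb{P}^m$, the Hadamard product $X*Y$ is the closure of the image of the rational map $X\times Y\dashrightarrow\mathbb{P}^m$, $(x,y)\mapsto(x_0y_0:\dots:x_my_m)$; $X^{[1]}=X$ and $X^{[k]}=X*X^{[k-1]}$. For a subset $M$ of an open probability simplex, $M^{[k]}$ is the set of vectors obtained by componentwise multiplication of $k$ elements of $M$ followed by rescaling so that the coordinates sum to one. *)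

theory Defs
  imports Complex_Main
begin

text \<open>Binary states v in {0,1}^n are encoded as subsets of {..<n}
  (v_j = 1 iff j in v).  Points of C^(2^n) are functions on such subsets,
  zero outside the index set.  A subset of projective space P^(2^n-1) is
  represented by its affine cone (minus the origin).\<close>

definition states :: "nat \<Rightarrow> nat set set" where
  "states n = Pow {..<n}"

inductive_set poly_fun :: "'a set \<Rightarrow> (('a \<Rightarrow> complex) \<Rightarrow> complex) set"
  for I :: "'a set" where
  const: "(\<lambda>x. c) \<in> poly_fun I"
| coord: "i \<in> I \<Longrightarrow> (\<lambda>x. x i) \<in> poly_fun I"
| add: "f \<in> poly_fun I \<Longrightarrow> g \<in> poly_fun I \<Longrightarrow> (\<lambda>x. f x + g x) \<in> poly_fun I"
| mult: "f \<in> poly_fun I \<Longrightarrow> g \<in> poly_fun I \<Longrightarrow> (\<lambda>x. f x * g x) \<in> poly_fun I"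

definition homogeneous :: "(('a \<Rightarrow> complex) \<Rightarrow> complex) \<Rightarrow> nat \<Rightarrow> bool" where
  "homogeneous f d \<longleftrightarrow> (\<forall>c x. f (\<lambda>i. c * x i) = c ^ d * f x)"

definition proj_pts :: "'a set \<Rightarrow> ('a \<Rightarrow> complex) set" where
  "proj_pts I = {x. (\<forall>i. i \<notin> I \<longrightarrow> x i = 0) \<and> (\<exists>i\<in>I. x i \<noteq> 0)}"

definition zariski_closure :: "'a set \<Rightarrow> ('a \<Rightarrow> complex) set \<Rightarrow> ('a \<Rightarrow> complex) set" where
  "zariski_closure I S = {x \<in> proj_pts I. \<forall>f d. f \<in> poly_fun I \<and> homogeneous f d \<and>
       (\<forall>y\<in>S. f y = 0) \<longrightarrow> f x = 0}"

text \<open>Hadamard product of projective varieties: closure of the image of the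
  rational map (x,y) |-> x*y (defined where the product is nonzero).\<close>
definition hadamard :: "'a set \<Rightarrow> ('a \<Rightarrow> complex) set \<Rightarrow> ('a \<Rightarrow> complex) set \<Rightarrow> ('a \<Rightarrow> complex) set" where
  "hadamard I X Y = zariski_closure I
     {z. \<exists>x\<in>X. \<exists>y\<in>Y. z = (\<lambda>i. x i * y i) \<and> z \<in> proj_pts I}"

definition hadamard_pow :: "'a set \<Rightarrow> ('a \<Rightarrow> complex) set \<Rightarrow> nat \<Rightarrow> ('a \<Rightarrow> complex) set" where
  "hadamard_pow I X k = ((hadamard I X) ^^ (k - 1)) X"

definition rbm_psi :: "(nat \<Rightarrow> nat \<Rightarrow> real) \<Rightarrow> (nat \<Rightarrow> real) \<Rightarrow> (nat \<Rightarrow> real) \<Rightarrow> nat set \<Rightarrow> nat set \<Rightarrow> real" where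
  "rbm_psi W b c v h = exp ((\<Sum>i\<in>h. \<Sum>j\<in>v. W i j) + (\<Sum>j\<in>v. b j) + (\<Sum>i\<in>h. c i))"

definition rbm_dist :: "nat \<Rightarrow> nat \<Rightarrow> (nat \<Rightarrow> nat \<Rightarrow> real) \<Rightarrow> (nat \<Rightarrow> real) \<Rightarrow> (nat \<Rightarrow> real) \<Rightarrow> nat set \<Rightarrow> real" where
  "rbm_dist n k W b c = (\<lambda>v. if v \<in> states n then
      (\<Sum>h\<in>states k. rbm_psi W b c v h) / (\<Sum>v'\<in>states n. \<Sum>h\<in>states k. rbm_psi W b c v' h)
    else 0)"

definition rbm_model :: "nat \<Rightarrow> nat \<Rightarrow> (nat set \<Rightarrow> real) set" where
  "rbm_model n k = {p. \<exists>W b c. p = rbm_dist n k W b c}"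

definition rbm_variety :: "nat \<Rightarrow> nat \<Rightarrow> (nat set \<Rightarrow> complex) set" where
  "rbm_variety n k = zariski_closure (states n) ((\<lambda>p v. complex_of_real (p v)) ` rbm_model n k)"

definition normalize_dist :: "nat \<Rightarrow> (nat set \<Rightarrow> real) \<Rightarrow> (nat set \<Rightarrow> real)" where
  "normalize_dist n x = (\<lambda>v. x v / (\<Sum>v'\<in>states n. x v'))"

definition model_hadamard :: "nat \<Rightarrow> (nat set \<Rightarrow> real) set \<Rightarrow> (nat set \<Rightarrow> real) set \<Rightarrow> (nat set \<Rightarrow> real) set" where
  "model_hadamard n M N = {normalize_dist n (\<lambda>v. p v * q v) | p q. p \<in> M \<and> q \<in> N}"

definition model_hadamard_pow :: "nat \<Rightarrow> (nat set \<Rightarrow> real) set \<Rightarrow> nat \<Rightarrow> (nat set \<Rightarrow> real) set" where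
  "model_hadamard_pow n M k = ((model_hadamard n M) ^^ (k - 1)) M"

end

theory Submission imports Defs begin

definition rbmG :: "nat \<Rightarrow> nat \<Rightarrow> (nat \<Rightarrow> nat \<Rightarrow> real) \<Rightarrow> (nat \<Rightarrow> real) \<Rightarrow> (nat \<Rightarrow> real) \<Rightarrow> nat set \<Rightarrow> real" where
  "rbmG n k W b c = (\<lambda>v. if v \<in> states n then exp (\<Sum>j\<in>v. b j) * (\<Prod>i<k. 1 + exp (c i + (\<Sum>j\<in>v. W i j))) else 0)"

lemma sum_psi: "(\<Sum>h\<in>states k. rbm_psi W b c v h) = exp (\<Sum>j\<in>v. b j) * (\<Prod>i<k. 1 + exp (c i + (\<Sum>j\<in>v. W i j)))"
proof -
  have "(\<Prod>i<k. exp (c i + (\<Sum>j\<in>v. W i j)) + 1) = (\<Sum>X\<in>Pow {..<k}. (\<Prod>i\<in>X. exp (c i + (\<Sum>j\<in>v. W i j))))"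
    by (subst prod_add) auto
  moreover have "rbm_psi W b c v h = exp (\<Sum>j\<in>v. b j) * (\<Prod>i\<in>h. exp (c i + (\<Sum>j\<in>v. W i j)))"
    if "h \<in> states k" for h
  proof -
    have fh: "finite h" using that unfolding states_def by (auto intro: finite_subset)
    have "rbm_psi W b c v h = exp (\<Sum>j\<in>v. b j) * exp (\<Sum>i\<in>h. c i + (\<Sum>j\<in>v. W i j))"
      unfolding rbm_psi_def by (simp add: sum.distrib exp_add[symmetric] algebra_simps)
    then show ?thesis using fh by (simp add: exp_sum)
  qed
  ultimately show ?thesis
    by (simp add: sum_distrib_left states_def add.commute)
qed

lemma states_fin: "finite (states n)" and states_ne: "{} \<in> states n"
  unfolding states_def by auto

lemma G_pos: "v \<in> states n \<Longrightarrow> rbmG n k W b c v > 0"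
  unfolding rbmG_def by (auto intro!: mult_pos_pos prod_pos simp: add_pos_pos)

lemma G_out: "v \<notin> states n \<Longrightarrow> rbmG n k W b c v = 0"
  unfolding rbmG_def by auto

lemma dist_G: "rbm_dist n k W b c = normalize_dist n (rbmG n k W b c)"
  unfolding rbm_dist_def normalize_dist_def
  by (rule ext) (simp add: sum_psi rbmG_def cong: sum.cong)


lemma norm_scale: "c \<noteq> 0 \<Longrightarrow> normalize_dist n (\<lambda>v. c * x v) = normalize_dist n x"
  unfolding normalize_dist_def by (rule ext) (simp add: sum_distrib_left[symmetric])

lemma norm_prod:
  assumes "(\<Sum>v\<in>states n. p v) \<noteq> 0" "(\<Sum>v\<in>states n. q v) \<noteq> 0"
  shows "normalize_dist n (\<lambda>v. normalize_dist n p v * normalize_dist n q v) = normalize_dist n (\<lambda>v. p v * q v)"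
proof -
  have "(\<lambda>v. normalize_dist n p v * normalize_dist n q v) =
     (\<lambda>v. (1 / ((\<Sum>v\<in>states n. p v) * (\<Sum>v\<in>states n. q v))) * (p v * q v))"
    unfolding normalize_dist_def by (rule ext) simp
  then show ?thesis by (simp only:) (rule norm_scale, simp add: assms)
qed

lemma G_sum_pos: "(\<Sum>v\<in>states n. rbmG n k W b c v) > 0"
  by (rule sum_pos) (auto simp: states_fin G_pos intro: states_ne)

lemma G_mult1:
  "(\<lambda>v. rbmG n 1 W1 b1 c1 v * rbmG n k W2 b2 c2 v) =
   rbmG n (Suc k) (\<lambda>i. if i < k then W2 i else W1 0) (\<lambda>j. b1 j + b2 j) (\<lambda>i. if i < k then c2 i else c1 0)"
proof (rule ext)
  fix v
  have "(\<Prod>i<k. 1 + exp ((if i < k then c2 i else c1 0) + (\<Sum>j\<in>v. (if i < k then W2 i else W1 0) j)))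
     = (\<Prod>i<k. 1 + exp (c2 i + (\<Sum>j\<in>v. W2 i j)))"
    by (rule prod.cong) auto
  then show "rbmG n 1 W1 b1 c1 v * rbmG n k W2 b2 c2 v =
   rbmG n (Suc k) (\<lambda>i. if i < k then W2 i else W1 0) (\<lambda>j. b1 j + b2 j) (\<lambda>i. if i < k then c2 i else c1 0) v"
    unfolding rbmG_def by (simp add: sum.distrib exp_add mult_ac)
qed

lemma G_mult2:
  "rbmG n (Suc k) W b c = (\<lambda>v. rbmG n 1 (\<lambda>i. W k) (\<lambda>j. 0) (\<lambda>i. c k) v * rbmG n k W b c v)"
proof (rule ext)
  fix v
  let ?f = "\<lambda>i. 1 + exp (c i + (\<Sum>j\<in>v. W i j))"
  have "(\<Prod>i<Suc k. ?f i) = ?f k * (\<Prod>i<k. ?f i)"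
    by (simp add: lessThan_Suc)
  then show "rbmG n (Suc k) W b c v = rbmG n 1 (\<lambda>i. W k) (\<lambda>j. 0) (\<lambda>i. c k) v * rbmG n k W b c v"
    unfolding rbmG_def by simp
qed

lemma model_step: "rbm_model n (Suc k) = model_hadamard n (rbm_model n 1) (rbm_model n k)"
proof (rule set_eqI, rule iffI)
  fix p assume "p \<in> rbm_model n (Suc k)"
  then obtain W b c where p: "p = rbm_dist n (Suc k) W b c" unfolding rbm_model_def by auto
  let ?p1 = "rbm_dist n 1 (\<lambda>i. W k) (\<lambda>j. 0) (\<lambda>i. c k)"
  let ?q = "rbm_dist n k W b c"
  have "p = normalize_dist n (\<lambda>v. ?p1 v * ?q v)"
  proof -
    have "p = normalize_dist n (\<lambda>v. rbmG n 1 (\<lambda>i. W k) (\<lambda>j. 0) (\<lambda>i. c k) v * rbmG n k W b c v)"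
      unfolding p dist_G by (simp only: G_mult2[of n k W b c])
    also have "\<dots> = normalize_dist n (\<lambda>v. ?p1 v * ?q v)"
      unfolding dist_G by (rule norm_prod[symmetric]; rule less_imp_neq[symmetric], rule G_sum_pos)
    finally show ?thesis .
  qed
  moreover have "?p1 \<in> rbm_model n 1" "?q \<in> rbm_model n k" unfolding rbm_model_def by blast+
  ultimately show "p \<in> model_hadamard n (rbm_model n 1) (rbm_model n k)"
    unfolding model_hadamard_def by blast
next
  fix p assume "p \<in> model_hadamard n (rbm_model n 1) (rbm_model n k)"
  then obtain W1 b1 c1 W2 b2 c2 where
    p: "p = normalize_dist n (\<lambda>v. rbm_dist n 1 W1 b1 c1 v * rbm_dist n k W2 b2 c2 v)"
    unfolding model_hadamard_def rbm_model_def by auto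
  have "p = rbm_dist n (Suc k) (\<lambda>i. if i < k then W2 i else W1 0) (\<lambda>j. b1 j + b2 j) (\<lambda>i. if i < k then c2 i else c1 0)"
    unfolding p dist_G
    apply (subst norm_prod)
      apply (rule less_imp_neq[symmetric], rule G_sum_pos)+
    apply (simp only: G_mult1)
    done
  then show "p \<in> rbm_model n (Suc k)" unfolding rbm_model_def by blast
qed

lemma model_pow: "(model_hadamard n (rbm_model n 1) ^^ m) (rbm_model n 1) = rbm_model n (Suc m)"
proof (induction m)
  case 0 then show ?case by simp
next
  case (Suc m)
  show ?case by (simp only: funpow.simps comp_def Suc.IH model_step[of n "Suc m"])
qed


lemma poly_fun_scale: "f \<in> poly_fun I \<Longrightarrow> (\<lambda>x. f (\<lambda>i. x i * b i)) \<in> poly_fun I"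
proof (induction rule: poly_fun.induct)
  case (const c) then show ?case by (rule poly_fun.const)
next
  case (coord i) then show ?case using poly_fun.mult[OF poly_fun.coord[OF coord] poly_fun.const[of "b i"]] by simp
next
  case (add f g) then show ?case using poly_fun.add by blast
next
  case (mult f g) then show ?case using poly_fun.mult by blast
qed

lemma poly_fun_scale': "f \<in> poly_fun I \<Longrightarrow> (\<lambda>y. f (\<lambda>i. a i * y i)) \<in> poly_fun I"
  using poly_fun_scale[of f I a] by (simp add: mult.commute)

lemma zc_scaled:
  assumes "\<forall>s\<in>S. \<exists>t\<in>T. \<exists>c. s = (\<lambda>i. c * t i)"
  shows "zariski_closure I S \<subseteq> zariski_closure I T"
proof
  fix x assume x: "x \<in> zariski_closure I S"
  show "x \<in> zariski_closure I T"
    unfolding zariski_closure_def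
  proof (intro CollectI conjI allI impI)
    show "x \<in> proj_pts I" using x unfolding zariski_closure_def by auto
    fix f d assume fd: "f \<in> poly_fun I \<and> homogeneous f d \<and> (\<forall>y\<in>T. f y = 0)"
    have "\<forall>y\<in>S. f y = 0"
    proof
      fix s assume "s \<in> S"
      then obtain t c where "t \<in> T" "s = (\<lambda>i. c * t i)" using assms by blast
      then show "f s = 0" using fd unfolding homogeneous_def by auto
    qed
    then show "f x = 0" using x fd unfolding zariski_closure_def by blast
  qed
qed

lemma zc_sub: "S \<subseteq> proj_pts I \<Longrightarrow> S \<subseteq> zariski_closure I S"
  unfolding zariski_closure_def by blast

lemma zc_hadamard:
  assumes AB: "\<And>a b. a \<in> A \<Longrightarrow> b \<in> B \<Longrightarrow> (\<lambda>i. a i * b i) \<in> proj_pts I"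
    and A: "A \<subseteq> proj_pts I" and B: "B \<subseteq> proj_pts I"
  shows "hadamard I (zariski_closure I A) (zariski_closure I B) =
         zariski_closure I {z. \<exists>x\<in>A. \<exists>y\<in>B. z = (\<lambda>i. x i * y i)}"
proof -
  let ?T = "{z. \<exists>x\<in>A. \<exists>y\<in>B. z = (\<lambda>i. x i * y i)}"
  let ?T' = "{z. \<exists>x\<in>A. \<exists>y\<in>B. z = (\<lambda>i. x i * y i) \<and> z \<in> proj_pts I}"
  let ?S = "{z. \<exists>x\<in>zariski_closure I A. \<exists>y\<in>zariski_closure I B. z = (\<lambda>i. x i * y i) \<and> z \<in> proj_pts I}"
  have T: "?T' = ?T" using AB by blast
  have "zariski_closure I ?T \<subseteq> zariski_closure I ?S"
    by (rule zc_scaled) (use zc_sub[OF A] zc_sub[OF B] AB in \<open>fastforce intro!: exI[of _ 1]\<close>)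
  moreover have "zariski_closure I ?S \<subseteq> zariski_closure I ?T"
  proof
    fix z assume z: "z \<in> zariski_closure I ?S"
    show "z \<in> zariski_closure I ?T"
      unfolding zariski_closure_def
    proof (intro CollectI conjI allI impI)
      show "z \<in> proj_pts I" using z unfolding zariski_closure_def by auto
      fix f d assume fd: "f \<in> poly_fun I \<and> homogeneous f d \<and> (\<forall>y\<in>?T. f y = 0)"
      have hom: "f (\<lambda>i. c * w i) = c ^ d * f w" for c w using fd unfolding homogeneous_def by blast
      have step1: "f (\<lambda>i. x i * b i) = 0" if x: "x \<in> zariski_closure I A" and b: "b \<in> B" for x b
      proof -
        let ?g = "\<lambda>x. f (\<lambda>i. x i * b i)"
        have "?g \<in> poly_fun I" using fd poly_fun_scale by blast
        moreover have "homogeneous ?g d" unfolding homogeneous_def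
        proof (intro allI)
          fix c w
          have "(\<lambda>i. c * w i * b i) = (\<lambda>i. c * (w i * b i))" by (simp add: mult.assoc)
          then show "?g (\<lambda>i. c * w i) = c ^ d * ?g w" using hom by simp
        qed
        moreover have "\<forall>a\<in>A. ?g a = 0" using fd b by blast
        ultimately show ?thesis using x unfolding zariski_closure_def by blast
      qed
      have step2: "f (\<lambda>i. x i * y i) = 0" if x: "x \<in> zariski_closure I A" and y: "y \<in> zariski_closure I B" for x y
      proof -
        let ?g = "\<lambda>y. f (\<lambda>i. x i * y i)"
        have "?g \<in> poly_fun I" using fd poly_fun_scale' by blast
        moreover have "homogeneous ?g d" unfolding homogeneous_def
        proof (intro allI)
          fix c w
          have "(\<lambda>i. x i * (c * w i)) = (\<lambda>i. c * (x i * w i))" by (simp add: mult.left_commute)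
          then show "?g (\<lambda>i. c * w i) = c ^ d * ?g w" using hom by simp
        qed
        moreover have "\<forall>b\<in>B. ?g b = 0" using step1 x by blast
        ultimately show ?thesis using y unfolding zariski_closure_def by blast
      qed
      have "\<forall>w\<in>?S. f w = 0" using step2 by blast
      then show "f z = 0" using z fd unfolding zariski_closure_def by blast
    qed
  qed
  ultimately show ?thesis unfolding hadamard_def by blast
qed


lemma model_pos: "p \<in> rbm_model n k \<Longrightarrow> v \<in> states n \<Longrightarrow> p v > 0"
  unfolding rbm_model_def using G_sum_pos G_pos
  by (auto simp: dist_G normalize_dist_def)

lemma model_out: "p \<in> rbm_model n k \<Longrightarrow> v \<notin> states n \<Longrightarrow> p v = 0"
  unfolding rbm_model_def by (auto simp: dist_G normalize_dist_def G_out)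

lemma prod_sum_pos: "p \<in> rbm_model n k \<Longrightarrow> q \<in> rbm_model n m \<Longrightarrow> (\<Sum>v\<in>states n. p v * q v) > 0"
  by (rule sum_pos) (auto simp: states_fin model_pos intro: states_ne)

lemma C_proj: "p \<in> rbm_model n k \<Longrightarrow> (\<lambda>v. complex_of_real (p v)) \<in> proj_pts (states n)"
  unfolding proj_pts_def using model_pos[of p n k "{}"] model_out[of p n k] states_ne[of n]
  by (auto intro!: bexI[of _ "{}"])

lemma C_proj2: "p \<in> rbm_model n k \<Longrightarrow> q \<in> rbm_model n m \<Longrightarrow>
   (\<lambda>v. complex_of_real (p v) * complex_of_real (q v)) \<in> proj_pts (states n)"
  unfolding proj_pts_def using model_pos[of p n k "{}"] model_pos[of q n m "{}"] model_out[of p n k] states_ne[of n]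
  by (auto intro!: bexI[of _ "{}"])

lemma variety_step:
  "rbm_variety n (Suc k) = hadamard (states n) (rbm_variety n 1) (rbm_variety n k)"
proof -
  let ?C = "\<lambda>p v. complex_of_real (p v)"
  let ?T = "{z. \<exists>x\<in>?C ` rbm_model n 1. \<exists>y\<in>?C ` rbm_model n k. z = (\<lambda>i. x i * y i)}"
  have H: "hadamard (states n) (rbm_variety n 1) (rbm_variety n k) = zariski_closure (states n) ?T"
    unfolding rbm_variety_def
    by (rule zc_hadamard) (use C_proj C_proj2 in auto)
  have "zariski_closure (states n) (?C ` rbm_model n (Suc k)) \<subseteq> zariski_closure (states n) ?T"
  proof (rule zc_scaled, rule ballI)
    fix s assume "s \<in> ?C ` rbm_model n (Suc k)"
    then obtain p q where p: "p \<in> rbm_model n 1" and q: "q \<in> rbm_model n k"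
      and s: "s = ?C (normalize_dist n (\<lambda>v. p v * q v))"
      unfolding model_step model_hadamard_def by blast
    let ?S = "\<Sum>v\<in>states n. p v * q v"
    have "s = (\<lambda>i. complex_of_real (1 / ?S) * (?C p i * ?C q i))"
      unfolding s normalize_dist_def by (rule ext) simp
    moreover have "(\<lambda>i. ?C p i * ?C q i) \<in> ?T"
    proof -
      have "?C p \<in> ?C ` rbm_model n 1" "?C q \<in> ?C ` rbm_model n k" using p q by blast+
      then show ?thesis by (intro CollectI bexI) (rule refl)
    qed
    ultimately show "\<exists>t\<in>?T. \<exists>c. s = (\<lambda>i. c * t i)"
      by (intro bexI[of _ "\<lambda>i. ?C p i * ?C q i"] exI[of _ "complex_of_real (1 / ?S)"])
  qed
  moreover have "zariski_closure (states n) ?T \<subseteq> zariski_closure (states n) (?C ` rbm_model n (Suc k))"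
  proof (rule zc_scaled, rule ballI)
    fix s assume "s \<in> ?T"
    then obtain p q where p: "p \<in> rbm_model n 1" and q: "q \<in> rbm_model n k"
      and s: "s = (\<lambda>i. ?C p i * ?C q i)" by blast
    let ?S = "\<Sum>v\<in>states n. p v * q v"
    have S: "?S \<noteq> 0" using prod_sum_pos[OF p q] by simp
        have e: "s = (\<lambda>i. complex_of_real ?S * ?C (normalize_dist n (\<lambda>v. p v * q v)) i)"
      unfolding s normalize_dist_def
    proof (rule ext)
      fix i
      have "?S * (p i * q i / ?S) = p i * q i" using S by simp
      then show "complex_of_real (p i) * complex_of_real (q i) = complex_of_real ?S * complex_of_real (p i * q i / ?S)"
        unfolding of_real_mult[symmetric] by (simp only:)
    qed
    have m: "normalize_dist n (\<lambda>v. p v * q v) \<in> rbm_model n (Suc k)"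
      unfolding model_step model_hadamard_def using p q by blast
    show "\<exists>t\<in>?C ` rbm_model n (Suc k). \<exists>c. s = (\<lambda>i. c * t i)"
      by (rule bexI[of _ "?C (normalize_dist n (\<lambda>v. p v * q v))"], rule exI[of _ "complex_of_real ?S"], rule e, rule imageI, rule m)
  qed
  ultimately have "rbm_variety n (Suc k) = zariski_closure (states n) ?T"
    unfolding rbm_variety_def by (rule equalityI)
  then show ?thesis using H by (rule trans[OF _ sym])
qed

lemma variety_pow: "(hadamard (states n) (rbm_variety n 1) ^^ m) (rbm_variety n 1) = rbm_variety n (Suc m)"
proof (induction m)
  case 0 then show ?case by simp
next
  case (Suc m)
  show ?case by (simp only: funpow.simps comp_def Suc.IH variety_step[of n "Suc m"])
qed

theorem proposition2p1:
  fixes n k :: nat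
  assumes "n \<ge> 1" and "k \<ge> 1"
  shows "rbm_variety n k = hadamard_pow (states n) (rbm_variety n 1) k
       \<and> rbm_model n k = model_hadamard_pow n (rbm_model n 1) k"
proof -
  obtain m where k: "k = Suc m" using assms(2) by (cases k) auto
  have Suc_m: "Suc m - 1 = m" by simp
  show ?thesis unfolding hadamard_pow_def model_hadamard_pow_def k
    by (simp only: Suc_m variety_pow model_pow)
qed

end
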